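(* Let $G$ be an orderable group. Then: (1) $\operatorname{Conj}(G)$ is a right orderable quandle. (2) $\operatorname{Core}(G)$ is a left orderable quandle. (3) If $\phi\in\operatorname{Aut}(G)$ is an order reversing automorphism, then $\operatorname{Alex}(G,\phi)$ is a left orderable quandle.
   Context: A group $G$ is orderable if it admits a linear order $<$ such that $x<y$ implies $zx<zy$ and $xz<yz$ for all $x,y,z\in G$; an automorphism $\phi$ of $G$ is order reversing (for such an order) if $x<y$ implies $\phi(y)<\phi(x)$. $\operatorname{Conj}(G)$ is the set $G$ with operation $a*b=b^{-1}ab$; $\operatorname{Core}(G)$ is the set $G$ with operation $a*b=ba^{-1}b$; for $\phi\in\operatorname{Aut}(G)$, $\operatorname{Alex}(G,\phi)$ is the set $G$ with operation $a*b=\phi(ab^{-1})b$; these are quandles. A quandle $Q$ with operation $*$ is right orderable if there is a linear order $<$ on $Q$ such that $x<y$ implies $x*z<y*z$ for all $x,y,z\in Q$, and left orderable if there is a linear order $<$ on $Q$ such that $x<y$ implies $z*x<z*y$ for all $x,y,z\in Q$. *)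

theory Defs
  imports "HOL-Algebra.Group"
begin

definition lin_order_on :: "'a set \<Rightarrow> ('a \<Rightarrow> 'a \<Rightarrow> bool) \<Rightarrow> bool" where
  "lin_order_on S lt \<longleftrightarrow>
     (\<forall>x\<in>S. \<not> lt x x) \<and>
     (\<forall>x\<in>S. \<forall>y\<in>S. \<forall>z\<in>S. lt x y \<longrightarrow> lt y z \<longrightarrow> lt x z) \<and>
     (\<forall>x\<in>S. \<forall>y\<in>S. x \<noteq> y \<longrightarrow> lt x y \<or> lt y x)"

definition group_order :: "('a, 'b) monoid_scheme \<Rightarrow> ('a \<Rightarrow> 'a \<Rightarrow> bool) \<Rightarrow> bool" where
  "group_order G lt \<longleftrightarrow> lin_order_on (carrier G) lt \<and>
     (\<forall>x\<in>carrier G. \<forall>y\<in>carrier G. \<forall>z\<in>carrier G. lt x y \<longrightarrow>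
        lt (z \<otimes>\<^bsub>G\<^esub> x) (z \<otimes>\<^bsub>G\<^esub> y) \<and> lt (x \<otimes>\<^bsub>G\<^esub> z) (y \<otimes>\<^bsub>G\<^esub> z))"

definition orderable_group :: "('a, 'b) monoid_scheme \<Rightarrow> bool" where
  "orderable_group G \<longleftrightarrow> group G \<and> (\<exists>lt. group_order G lt)"

definition order_reversing :: "('a, 'b) monoid_scheme \<Rightarrow> ('a \<Rightarrow> 'a \<Rightarrow> bool) \<Rightarrow> ('a \<Rightarrow> 'a) \<Rightarrow> bool" where
  "order_reversing G lt \<phi> \<longleftrightarrow>
     (\<forall>x\<in>carrier G. \<forall>y\<in>carrier G. lt x y \<longrightarrow> lt (\<phi> y) (\<phi> x))"

definition conj_op :: "('a, 'b) monoid_scheme \<Rightarrow> 'a \<Rightarrow> 'a \<Rightarrow> 'a" where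
  "conj_op G a b = inv\<^bsub>G\<^esub> b \<otimes>\<^bsub>G\<^esub> a \<otimes>\<^bsub>G\<^esub> b"

definition core_op :: "('a, 'b) monoid_scheme \<Rightarrow> 'a \<Rightarrow> 'a \<Rightarrow> 'a" where
  "core_op G a b = b \<otimes>\<^bsub>G\<^esub> inv\<^bsub>G\<^esub> a \<otimes>\<^bsub>G\<^esub> b"

definition alex_op :: "('a, 'b) monoid_scheme \<Rightarrow> ('a \<Rightarrow> 'a) \<Rightarrow> 'a \<Rightarrow> 'a \<Rightarrow> 'a" where
  "alex_op G \<phi> a b = \<phi> (a \<otimes>\<^bsub>G\<^esub> inv\<^bsub>G\<^esub> b) \<otimes>\<^bsub>G\<^esub> b"

definition is_quandle :: "'a set \<Rightarrow> ('a \<Rightarrow> 'a \<Rightarrow> 'a) \<Rightarrow> bool" where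
  "is_quandle Q op \<longleftrightarrow>
     (\<forall>a\<in>Q. \<forall>b\<in>Q. op a b \<in> Q) \<and>
     (\<forall>a\<in>Q. op a a = a) \<and>
     (\<forall>b\<in>Q. bij_betw (\<lambda>a. op a b) Q Q) \<and>
     (\<forall>a\<in>Q. \<forall>b\<in>Q. \<forall>c\<in>Q. op (op a b) c = op (op a c) (op b c))"

definition right_orderable_quandle :: "'a set \<Rightarrow> ('a \<Rightarrow> 'a \<Rightarrow> 'a) \<Rightarrow> bool" where
  "right_orderable_quandle Q op \<longleftrightarrow> is_quandle Q op \<and>
     (\<exists>lt. lin_order_on Q lt \<and>
        (\<forall>x\<in>Q. \<forall>y\<in>Q. \<forall>z\<in>Q. lt x y \<longrightarrow> lt (op x z) (op y z)))"

definition left_orderable_quandle :: "'a set \<Rightarrow> ('a \<Rightarrow> 'a \<Rightarrow> 'a) \<Rightarrow> bool" where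
  "left_orderable_quandle Q op \<longleftrightarrow> is_quandle Q op \<and>
     (\<exists>lt. lin_order_on Q lt \<and>
        (\<forall>x\<in>Q. \<forall>y\<in>Q. \<forall>z\<in>Q. lt x y \<longrightarrow> lt (op z x) (op z y)))"

end

theory Submission
  imports Defs
begin

context group
begin

lemma canc1 [simp]: "x \<in> carrier G \<Longrightarrow> y \<in> carrier G \<Longrightarrow> x \<otimes> (inv x \<otimes> y) = y"
  by (simp add: m_assoc[symmetric])
lemma canc2 [simp]: "x \<in> carrier G \<Longrightarrow> y \<in> carrier G \<Longrightarrow> inv x \<otimes> (x \<otimes> y) = y"
  by (simp add: m_assoc[symmetric])

lemma go_left: "group_order G lt \<Longrightarrow> x \<in> carrier G \<Longrightarrow> y \<in> carrier G \<Longrightarrow> z \<in> carrier G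
  \<Longrightarrow> lt x y \<Longrightarrow> lt (z \<otimes> x) (z \<otimes> y)"
  unfolding group_order_def by blast

lemma go_right: "group_order G lt \<Longrightarrow> x \<in> carrier G \<Longrightarrow> y \<in> carrier G \<Longrightarrow> z \<in> carrier G
  \<Longrightarrow> lt x y \<Longrightarrow> lt (x \<otimes> z) (y \<otimes> z)"
  unfolding group_order_def by blast

lemma go_trans: "group_order G lt \<Longrightarrow> x \<in> carrier G \<Longrightarrow> y \<in> carrier G \<Longrightarrow> z \<in> carrier G
  \<Longrightarrow> lt x y \<Longrightarrow> lt y z \<Longrightarrow> lt x z"
  unfolding group_order_def lin_order_on_def by blast

lemma go_inv: "group_order G lt \<Longrightarrow> x \<in> carrier G \<Longrightarrow> y \<in> carrier G
  \<Longrightarrow> lt x y \<Longrightarrow> lt (inv y) (inv x)"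
proof -
  assume a: "group_order G lt" "x \<in> carrier G" "y \<in> carrier G" "lt x y"
  have h0: "lt (inv y \<otimes> x) (inv y \<otimes> y)"
    using go_left[OF a(1) a(2) a(3) inv_closed[OF a(3)] a(4)] .
  have "lt (inv y \<otimes> x \<otimes> inv x) (inv y \<otimes> y \<otimes> inv x)"
    by (rule go_right[OF a(1) m_closed[OF inv_closed[OF a(3)] a(2)] m_closed[OF inv_closed[OF a(3)] a(3)] inv_closed[OF a(2)] h0])
  moreover have "inv y \<otimes> x \<otimes> inv x = inv y" using a by (simp add: m_assoc)
  moreover have "inv y \<otimes> y \<otimes> inv x = inv x" using a by (simp add: m_assoc[symmetric])
  ultimately show ?thesis by simp
qed

lemma conj_quandle: "is_quandle (carrier G) (conj_op G)"
  unfolding is_quandle_def conj_op_def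
proof (intro conjI ballI)
  fix b assume b: "b \<in> carrier G"
  show "bij_betw (\<lambda>a. inv b \<otimes> a \<otimes> b) (carrier G) (carrier G)"
    by (rule bij_betw_byWitness[where f'="\<lambda>a. b \<otimes> a \<otimes> inv b"])
       (use b in \<open>auto simp: m_assoc[symmetric]\<close>, auto simp: b m_assoc)
next
  fix a b c assume "a \<in> carrier G" "b \<in> carrier G" "c \<in> carrier G"
  then show "inv c \<otimes> (inv b \<otimes> a \<otimes> b) \<otimes> c =
       inv (inv c \<otimes> b \<otimes> c) \<otimes> (inv c \<otimes> a \<otimes> c) \<otimes> (inv c \<otimes> b \<otimes> c)"
    by (simp add: inv_mult_group m_assoc)
qed (auto simp: m_assoc)

lemma core_quandle: "is_quandle (carrier G) (core_op G)"
  unfolding is_quandle_def core_op_def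
proof (intro conjI ballI)
  fix b assume b: "b \<in> carrier G"
  show "bij_betw (\<lambda>a. b \<otimes> inv a \<otimes> b) (carrier G) (carrier G)"
    by (rule bij_betw_byWitness[where f'="\<lambda>a. b \<otimes> inv a \<otimes> b"])
       (use b in \<open>auto simp: m_assoc inv_mult_group\<close>)
next
  fix a b c assume "a \<in> carrier G" "b \<in> carrier G" "c \<in> carrier G"
  then show "c \<otimes> inv (b \<otimes> inv a \<otimes> b) \<otimes> c =
       (c \<otimes> inv b \<otimes> c) \<otimes> inv (c \<otimes> inv a \<otimes> c) \<otimes> (c \<otimes> inv b \<otimes> c)"
    by (simp add: inv_mult_group m_assoc)
qed (auto simp: m_assoc)

lemma alex_quandle:
  assumes phi: "\<phi> \<in> iso G G"
  shows "is_quandle (carrier G) (alex_op G \<phi>)"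
proof -
  interpret h: group_hom G G \<phi>
    using phi by (simp add: group_hom_def group_hom_axioms_def iso_def is_group)
  have bij: "bij_betw \<phi> (carrier G) (carrier G)" using phi by (simp add: iso_def)
  define \<psi> where "\<psi> = inv_into (carrier G) \<phi>"
  have ps1: "\<psi> c \<in> carrier G" "\<phi> (\<psi> c) = c" if "c \<in> carrier G" for c
    using bij that unfolding \<psi>_def
    by (auto simp: bij_betw_inv_into_right intro: inv_into_into[of c \<phi>] dest!: bij_betw_imp_surj_on)
  have ps2: "\<psi> (\<phi> a) = a" if "a \<in> carrier G" for a
    using bij that unfolding \<psi>_def by (simp add: bij_betw_inv_into_left)
  show ?thesis
  unfolding is_quandle_def alex_op_def
  proof (intro conjI ballI)
    fix b assume b: "b \<in> carrier G"
    show "bij_betw (\<lambda>a. \<phi> (a \<otimes> inv b) \<otimes> b) (carrier G) (carrier G)"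
    proof (rule bij_betw_byWitness[where f'="\<lambda>c. \<psi> (c \<otimes> inv b) \<otimes> b"])
      show "\<forall>a\<in>carrier G. \<psi> (\<phi> (a \<otimes> inv b) \<otimes> b \<otimes> inv b) \<otimes> b = a"
      proof
        fix a assume a: "a \<in> carrier G"
        have "\<phi> (a \<otimes> inv b) \<otimes> b \<otimes> inv b = \<phi> (a \<otimes> inv b)"
          using a b by (simp add: m_assoc)
        then show "\<psi> (\<phi> (a \<otimes> inv b) \<otimes> b \<otimes> inv b) \<otimes> b = a"
          using a b ps2[of "a \<otimes> inv b"] by (simp add: m_assoc)
      qed
      show "\<forall>c\<in>carrier G. \<phi> (\<psi> (c \<otimes> inv b) \<otimes> b \<otimes> inv b) \<otimes> b = c"
      proof
        fix c assume c: "c \<in> carrier G"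
        have "\<psi> (c \<otimes> inv b) \<otimes> b \<otimes> inv b = \<psi> (c \<otimes> inv b)"
          using c b ps1[of "c \<otimes> inv b"] by (simp add: m_assoc)
        then show "\<phi> (\<psi> (c \<otimes> inv b) \<otimes> b \<otimes> inv b) \<otimes> b = c"
          using c b ps1[of "c \<otimes> inv b"] by (simp add: m_assoc)
      qed
      show "(\<lambda>a. \<phi> (a \<otimes> inv b) \<otimes> b) ` carrier G \<subseteq> carrier G" using b by auto
      show "(\<lambda>c. \<psi> (c \<otimes> inv b) \<otimes> b) ` carrier G \<subseteq> carrier G" using b ps1 by auto
    qed
  next
    fix a b c assume abc: "a \<in> carrier G" "b \<in> carrier G" "c \<in> carrier G"
    have e1: "\<phi> (a \<otimes> inv c) \<otimes> c \<otimes> inv (\<phi> (b \<otimes> inv c) \<otimes> c) = \<phi> (a \<otimes> inv b)"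
    proof -
      have "\<phi> (a \<otimes> inv c) \<otimes> c \<otimes> inv (\<phi> (b \<otimes> inv c) \<otimes> c)
          = \<phi> (a \<otimes> inv c) \<otimes> inv (\<phi> (b \<otimes> inv c))"
        using abc by (simp add: m_assoc inv_mult_group)
      also have "\<dots> = \<phi> (a \<otimes> inv c \<otimes> inv (b \<otimes> inv c))"
        using abc by (simp add: h.hom_mult)
      also have "a \<otimes> inv c \<otimes> inv (b \<otimes> inv c) = a \<otimes> inv b"
        using abc by (simp add: m_assoc inv_mult_group)
      finally show ?thesis .
    qed
    have e2: "\<phi> (\<phi> (a \<otimes> inv b) \<otimes> b \<otimes> inv c) = \<phi> (\<phi> (a \<otimes> inv b)) \<otimes> \<phi> (b \<otimes> inv c)"
      using abc by (simp add: m_assoc h.hom_mult)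
    show "\<phi> (\<phi> (a \<otimes> inv b) \<otimes> b \<otimes> inv c) \<otimes> c =
       \<phi> (\<phi> (a \<otimes> inv c) \<otimes> c \<otimes> inv (\<phi> (b \<otimes> inv c) \<otimes> c)) \<otimes> (\<phi> (b \<otimes> inv c) \<otimes> c)"
    proof -
      have c0: "a \<otimes> inv b \<in> carrier G" "b \<otimes> inv c \<in> carrier G"
        by (rule m_closed[OF abc(1) inv_closed[OF abc(2)]], rule m_closed[OF abc(2) inv_closed[OF abc(3)]])
      have c1: "\<phi> (\<phi> (a \<otimes> inv b)) \<in> carrier G" "\<phi> (b \<otimes> inv c) \<in> carrier G"
        by (rule h.hom_closed[OF h.hom_closed[OF c0(1)]], rule h.hom_closed[OF c0(2)])
      show ?thesis unfolding e1 e2 using c1 abc(3) by (rule m_assoc)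
    qed
  next
    fix a b assume ab: "a \<in> carrier G" "b \<in> carrier G"
    show "\<phi> (a \<otimes> inv b) \<otimes> b \<in> carrier G"
      by (rule m_closed[OF h.hom_closed[OF m_closed[OF ab(1) inv_closed[OF ab(2)]]] ab(2)])
  next
    fix a assume a: "a \<in> carrier G"
    show "\<phi> (a \<otimes> inv a) \<otimes> a = a"
      by (subst r_inv[OF a], subst h.hom_one, rule l_one[OF a])
  qed
qed


lemma conj_ro: assumes lt: "group_order G lt"
  shows "right_orderable_quandle (carrier G) (conj_op G)"
proof -
  have lo: "lin_order_on (carrier G) lt" using lt by (simp add: group_order_def)
  show ?thesis
    unfolding right_orderable_quandle_def
  proof (intro conjI exI[of _ lt] ballI impI)
    fix x y z assume a: "x \<in> carrier G" "y \<in> carrier G" "z \<in> carrier G" "lt x y"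
    have "lt (inv z \<otimes> x) (inv z \<otimes> y)" using go_left[OF lt] a by simp
    then show "lt (conj_op G x z) (conj_op G y z)"
      unfolding conj_op_def using go_right[OF lt] a by simp
  next
    show "is_quandle (carrier G) (conj_op G)" by (rule conj_quandle)
  qed (rule lo)
qed

lemma core_lo: assumes lt: "group_order G lt"
  shows "left_orderable_quandle (carrier G) (core_op G)"
proof -
  have lo: "lin_order_on (carrier G) lt" using lt by (simp add: group_order_def)
  show ?thesis
    unfolding left_orderable_quandle_def
  proof (intro conjI exI[of _ lt] ballI impI)
    fix x y z assume a: "x \<in> carrier G" "y \<in> carrier G" "z \<in> carrier G" "lt x y"
    have 1: "lt (x \<otimes> inv z \<otimes> x) (y \<otimes> inv z \<otimes> x)"
      using go_right[OF lt] a by simp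
    have 2: "lt (y \<otimes> inv z \<otimes> x) (y \<otimes> inv z \<otimes> y)"
      using go_left[OF lt] a by simp
    show "lt (core_op G z x) (core_op G z y)"
      unfolding core_op_def using go_trans[OF lt _ _ _ 1 2] a by simp
  next
    show "is_quandle (carrier G) (core_op G)" by (rule core_quandle)
  qed (rule lo)
qed

lemma alex_lo: assumes phi: "\<phi> \<in> iso G G" and lt: "group_order G lt"
  and rev: "order_reversing G lt \<phi>"
  shows "left_orderable_quandle (carrier G) (alex_op G \<phi>)"
proof -
  interpret h: group_hom G G \<phi>
    using phi by (simp add: group_hom_def group_hom_axioms_def iso_def is_group)
  have lo: "lin_order_on (carrier G) lt" using lt by (simp add: group_order_def)
  show ?thesis
    unfolding left_orderable_quandle_def
  proof (intro conjI exI[of _ lt] ballI impI)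
    fix x y z assume a: "x \<in> carrier G" "y \<in> carrier G" "z \<in> carrier G" "lt x y"
    have r: "lt (\<phi> y) (\<phi> x)" using rev a by (simp add: order_reversing_def)
    have i: "lt (inv (\<phi> x)) (inv (\<phi> y))" using go_inv[OF lt _ _ r] a by simp
    have e: "alex_op G \<phi> z w = \<phi> z \<otimes> inv (\<phi> w) \<otimes> w" if "w \<in> carrier G" for w
      unfolding alex_op_def using a that by simp
    have 0: "lt (\<phi> z \<otimes> inv (\<phi> x)) (\<phi> z \<otimes> inv (\<phi> y))"
      using go_left[OF lt _ _ _ i] a by simp
    have 1: "lt (\<phi> z \<otimes> inv (\<phi> x) \<otimes> x) (\<phi> z \<otimes> inv (\<phi> y) \<otimes> x)"
      using go_right[OF lt _ _ _ 0] a by simp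
    have 2: "lt (\<phi> z \<otimes> inv (\<phi> y) \<otimes> x) (\<phi> z \<otimes> inv (\<phi> y) \<otimes> y)"
      using go_left[OF lt _ _ _ a(4)] a by simp
    show "lt (alex_op G \<phi> z x) (alex_op G \<phi> z y)"
      unfolding e[OF a(1)] e[OF a(2)] using go_trans[OF lt _ _ _ 1 2] a by simp
  next
    show "is_quandle (carrier G) (alex_op G \<phi>)" by (rule alex_quandle[OF phi])
  qed (rule lo)
qed

end

theorem proposition3p4:
  fixes G :: "('a, 'b) monoid_scheme"
  assumes "orderable_group G"
  shows "right_orderable_quandle (carrier G) (conj_op G) \<and>
         left_orderable_quandle (carrier G) (core_op G) \<and>
         (\<forall>\<phi>. \<phi> \<in> iso G G \<longrightarrow> (\<exists>lt. group_order G lt \<and> order_reversing G lt \<phi>)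
              \<longrightarrow> left_orderable_quandle (carrier G) (alex_op G \<phi>))"
proof -
  have g: "group G" using assms by (simp add: orderable_group_def)
  obtain lt where lt: "group_order G lt" using assms by (auto simp: orderable_group_def)
  show ?thesis
    using group.conj_ro[OF g lt] group.core_lo[OF g lt] group.alex_lo[OF g] by blast
qed

end
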